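(* For every $c>1$, \[\Delta\theta_{MN}(c):=\int_{\sin^{-1}(1/c)}^{\pi-\sin^{-1}(1/c)}\frac{d\psi}{1-[R^-(c\sin\psi)]^2}<\pi.\]
   Context: Let $K(R)=\frac{\exp(\frac{R^2-1}{2})}{R}$ for $R>0$ (strictly decreasing on $(0,1]$ with $K(1)=1$). For $s\ge1$ let $R^-(s)\in(0,1]$ be the solution of $K(R)=s$ in $(0,1]$. The integral is the change of polar angle along the shrinking curve with energy $c$ (satisfying $K(R)=c\sin\psi$) between its two points with $R=1$, traversed through the part where $R<1$. *)

theory Defs
  imports "HOL-Analysis.Analysis"
begin

definition K :: "real \<Rightarrow> real" where
  "K R = exp ((R^2 - 1) / 2) / R"

text \<open>For s \<ge> 1, Rminus s is the unique solution R \<in> (0,1] of K R = s.\<close>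
definition Rminus :: "real \<Rightarrow> real" where
  "Rminus s = (THE R. 0 < R \<and> R \<le> 1 \<and> K R = s)"

definition DeltaTheta_MN :: "real \<Rightarrow> real" where
  "DeltaTheta_MN c = integral {arcsin (1/c) .. pi - arcsin (1/c)}
      (\<lambda>\<psi>. 1 / (1 - (Rminus (c * sin \<psi>))^2))"

end

theory Submission
  imports Defs
begin


lemma exp_lower3:
  fixes y :: real assumes "0 \<le> y"
  shows "1 + y + y^2/2 \<le> exp y"
proof -
  have s: "(\<lambda>n. y^n /\<^sub>R fact n) sums exp y" by (rule exp_converges)
  have "(\<Sum>n\<in>{..<3}. y^n /\<^sub>R fact n) \<le> (\<Sum>n. y^n /\<^sub>R fact n)"
    by (rule sum_le_suminf) (use s assms in \<open>auto simp: sums_iff\<close>)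
  also have "\<dots> = exp y" using s by (simp add: sums_iff)
  finally show ?thesis by (simp add: numeral_3_eq_3 fact_numeral power2_eq_square)
qed

lemma core_ineq:
  fixes y u :: real
  assumes y0: "0 < y" and y1: "y < 1" and u: "u = exp y"
  shows "1 - (1-y)*u \<le> y^2 * (u * (43/100 + 3/10*(1-y)*u))^2"
proof -
  define P where "P = 1 + y + y^2/2"
  define Q where "Q = 361/500 + 29/100*y"
  have uP: "P \<le> u" using exp_lower3[of y] y0 u P_def by simp
  have P0: "0 \<le> P" using y0 P_def by simp
  have "1 - (1-y)*u \<le> 1 - (1-y)*P" using uP y1 by (simp add: mult_left_mono)
  also have "\<dots> = y^2 * (1/2 + y/2)" unfolding P_def power2_eq_square by (simp add: field_simps)
  also have "\<dots> \<le> y^2 * Q^2"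
  proof -
    have e: "Q^2 - (1/2 + y/2) = 841/10000 * (y - 2031/4205)^2 + 7/4205"
      unfolding Q_def power2_eq_square by (simp add: field_simps)
    have "0 \<le> (y - 2031/4205)^2" by simp
    then have "1/2 + y/2 \<le> Q^2" using e by linarith
    then show ?thesis by (simp add: mult_left_mono)
  qed
  also have "\<dots> \<le> y^2 * (u * (43/100 + 3/10*(1-y)*u))^2"
  proof -
    have y2: "y^2 \<le> y" using y0 y1 by (simp add: power2_eq_square mult_left_le)
    have y3: "y^3 \<le> y^2" using y0 y1 by (simp add: power3_eq_cube power2_eq_square mult_left_le)
    have y4: "y^4 \<le> y^3" using y0 y1 by (simp add: power_Suc mult_left_le)
    have y5: "y^5 \<le> y^4" using y0 y1 by (simp add: power_Suc mult_left_le)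
    have e: "P * (43/100 + 3/10*(1-y)*P) - Q = 8/1000 + 44/100*y + 215/1000*y^2 - 3/10*y^3 - 225/1000*y^4 - 75/1000*y^5"
      unfolding P_def Q_def by (simp add: field_simps eval_nat_numeral)
    have Q1: "Q \<le> P * (43/100 + 3/10*(1-y)*P)" using e y2 y3 y4 y5 y0 by linarith
    have Q0: "0 \<le> Q" using y0 Q_def by simp
    have "P * (43/100 + 3/10*(1-y)*P) \<le> u * (43/100 + 3/10*(1-y)*u)"
      apply (rule mult_mono)
      using uP P0 y1 by (auto intro!: mult_mono add_mono)
    then have "Q \<le> u * (43/100 + 3/10*(1-y)*u)" using Q1 by linarith
    then have "Q^2 \<le> (u * (43/100 + 3/10*(1-y)*u))^2" using Q0 by (simp add: power_mono)
    then show ?thesis by (simp add: mult_left_mono)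
  qed
  finally show ?thesis .
qed


lemma K_pos: "0 < R \<Longrightarrow> 0 < K R" by (simp add: K_def)

lemma K_one: "K 1 = 1" by (simp add: K_def)

lemma K_cont: "0 < R \<Longrightarrow> isCont K R"
  unfolding K_def[abs_def] by (intro continuous_intros) auto

lemma K_strict_dec:
  assumes x: "0 < x" and xy: "x < y" and y1: "y \<le> 1"
  shows "K y < K x"
proof -
  have y: "0 < y" using x xy by simp
  have "ln (x/y) \<le> x/y - 1" using x y by (intro ln_le_minus_one) simp
  then have l: "1 - x/y \<le> ln (y/x)" using x y by (simp add: ln_div)
  have "1 - x/y = (y - x)/y" using y by (simp add: field_simps)
  also have "\<dots> \<ge> y - x" using y y1 xy by (simp add: divide_le_eq_1 le_divide_eq mult_le_cancel_left1)
  finally have a: "y - x \<le> ln (y/x)" using l by linarith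
  have "(y^2 - x^2)/2 = (y - x) * ((y + x)/2)" by (simp add: power2_eq_square field_simps)
  also have "\<dots> < (y - x) * 1" using xy y1 by (intro mult_strict_left_mono) auto
  finally have "(y^2 - x^2)/2 < y - x" by simp
  then have b: "(y^2 - x^2)/2 < ln (y/x)" using a by linarith
  have "exp ((y^2 - x^2)/2) < y/x" using b x y by (metis exp_less_cancel_iff exp_ln divide_pos_pos)
  moreover have "exp ((y^2-1)/2) = exp ((y^2 - x^2)/2) * exp ((x^2-1)/2)"
    by (simp add: exp_add[symmetric] field_simps)
  ultimately have "exp ((y^2-1)/2) < y/x * exp ((x^2-1)/2)"
    by (metis exp_gt_zero mult_strict_right_mono)
  then show ?thesis using x y unfolding K_def by (simp add: field_simps)
qed

lemma K_inj:
  assumes "0 < x" "x \<le> 1" "0 < y" "y \<le> 1" "K x = K y" shows "x = y"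
  using K_strict_dec assms by (metis linorder_neqE_linordered_idom less_irrefl)

lemma K_exists:
  assumes s: "1 \<le> s" shows "\<exists>R. 0 < R \<and> R \<le> 1 \<and> K R = s"
proof -
  define r where "r = exp (-1/2) / s"
  have r0: "0 < r" using s r_def by simp
  have e: "exp (-1/2::real) < 1" by simp
  have "exp (-1/2) \<le> s" using e s by linarith
  then have r1: "r \<le> 1" using s r_def by (simp add: divide_le_eq)
  have "exp (-1/2) \<le> exp ((r^2-1)/2)" by simp
  then have "s \<le> K r" using r0 s unfolding K_def r_def by (simp add: field_simps)
  moreover have "K 1 \<le> s" using s K_one by simp
  ultimately obtain R where "r \<le> R" "R \<le> 1" "K R = s"
    using IVT2[of K 1 s r] r1 r0 K_cont by force
  then show ?thesis using r0 by (intro exI[of _ R]) auto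
qed

lemma Rminus_props:
  assumes "1 \<le> s" shows "0 < Rminus s \<and> Rminus s \<le> 1 \<and> K (Rminus s) = s"
proof -
  obtain R where R: "0 < R \<and> R \<le> 1 \<and> K R = s" using K_exists assms by blast
  show ?thesis unfolding Rminus_def
    by (rule theI[of _ R]) (use R K_inj in blast)+
qed

lemma Rminus_K: assumes "0 < z" "z \<le> 1" shows "Rminus (K z) = z"
proof -
  have "1 \<le> K z" using K_one K_strict_dec[of z 1] assms by (cases "z = 1") auto
  then show ?thesis using Rminus_props[of "K z"] K_inj assms by blast
qed

lemma Rminus_one: "Rminus 1 = 1" using Rminus_K[of 1] K_one by simp

lemma Rminus_lt1: assumes "1 < s" shows "Rminus s < 1"
  using Rminus_props[of s] assms K_one by (metis less_eq_real_def less_irrefl)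

lemma Rminus_isCont: assumes s: "1 < s" shows "isCont Rminus s"
proof -
  define x where "x = Rminus s"
  have x0: "0 < x" and x1: "x < 1" and Kx: "K x = s"
    using Rminus_props[of s] Rminus_lt1[of s] s x_def by auto
  define d where "d = min (x/2) ((1-x)/2)"
  have d: "0 < d" using x0 x1 d_def by simp
  have zr: "0 < z \<and> z \<le> 1" if "\<bar>z - x\<bar> \<le> d" for z
  proof -
    have "z - x \<le> d" "x - z \<le> d" using that by (auto simp: abs_le_iff)
    moreover have "d \<le> x/2" "d \<le> (1-x)/2" unfolding d_def by (rule min.cobounded1, rule min.cobounded2)
    ultimately show ?thesis using x0 x1 by auto
  qed
  have "isCont Rminus (K x)"
    by (rule isCont_inverse_function[OF d]) (use zr Rminus_K K_cont in auto)
  then show ?thesis using Kx by simp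
qed



lemma f_bound:
  assumes s: "1 < s"
  shows "1 / (1 - (Rminus s)^2) \<le> 1 + (43/100 + 3/10 / s^2) / (s * sqrt (s^2 - 1))"
proof -
  define R where "R = Rminus s"
  have R0: "0 < R" and R1: "R < 1" and KR: "K R = s"
    using Rminus_props[of s] Rminus_lt1[of s] s R_def by auto
  define y where "y = 1 - R^2"
  define u where "u = exp y"
  define X where "X = s^2"
  define A where "A = 43/100 + 3/10 / s^2"
  define D where "D = s * sqrt (s^2 - 1)"
  have y0: "0 < y" using R0 R1 y_def by (simp add: power_less_one_iff)
  have y1: "y < 1" using R0 y_def by simp
  have u0: "0 < u" using u_def by simp
  have s0: "0 < s" using s by simp
  have "s^2 = (exp ((R^2-1)/2) / R)^2" using KR unfolding K_def by simp
  also have "\<dots> = exp ((R^2-1)/2)^2 / R^2" by (simp add: power_divide)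
  also have "exp ((R^2-1)/2)^2 = exp (R^2 - 1)" by (simp add: exp_double[symmetric] power2_eq_square exp_add[symmetric])
  also have "exp (R^2 - 1) = 1 / u" unfolding u_def y_def by (metis exp_minus inverse_eq_divide minus_diff_eq)
  finally have Xeq: "X * u * (1 - y) = 1" using R0 u0 unfolding X_def y_def by (simp add: field_simps)
  have X1: "1 < X" using s X_def by (simp add: one_less_power)
  have D0: "0 < D" using s X1 X_def D_def by simp
  have A0: "0 < A" unfolding A_def by (intro add_pos_nonneg) auto
  have DD: "D^2 = X * (X - 1)" using X1 unfolding D_def X_def by (simp add: power_mult_distrib)
  have invX: "1 / X = u * (1 - y)" using Xeq X1 by (simp add: field_simps)
  have Au: "A * u = u * (43/100 + 3/10*(1-y)*u)"
  proof -
    have "A = 43/100 + 3/10 * (1/X)" unfolding A_def X_def by simp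
    also have "\<dots> = 43/100 + 3/10 * (u * (1-y))" using invX by simp
    finally show ?thesis by (simp add: algebra_simps)
  qed
  have lhs: "((1-y)*D)^2 * u^2 = 1 - (1-y)*u"
  proof -
    have "((1-y)*D)^2 * u^2 = ((1-y)*X*u) * ((1-y)*u*(X-1))"
      using DD by (simp add: power_mult_distrib power2_eq_square)
    also have "\<dots> = 1 - (1-y)*u" using Xeq by (simp add: algebra_simps)
    finally show ?thesis .
  qed
  have rhs: "(y*A)^2 * u^2 = y^2 * (u * (43/100 + 3/10*(1-y)*u))^2"
  proof -
    have "(y*A)^2 * u^2 = y^2 * (A*u)^2" by (simp add: power_mult_distrib)
    then show ?thesis using Au by simp
  qed
  have "((1-y)*D)^2 * u^2 \<le> (y*A)^2 * u^2"
    using core_ineq[OF y0 y1 u_def] unfolding lhs rhs .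
  then have "((1-y)*D)^2 \<le> (y*A)^2" using u0 by simp
  then have c1: "(1-y)*D \<le> y*A" by (rule power2_le_imp_le) (use y0 A0 in simp)
  have c2: "(1-y)/y \<le> A/D"
  proof -
    have "(1-y)/y = ((1-y)*D)/(y*D)" using D0 by simp
    also have "\<dots> \<le> (y*A)/(y*D)" using c1 y0 D0 by (intro divide_right_mono) auto
    also have "\<dots> = A/D" using y0 by simp
    finally show ?thesis .
  qed
  have c3: "1 / (1 - R^2) = 1 + (1-y)/y"
  proof -
    have "1 - R^2 = y" using y_def by simp
    moreover have "1/y = 1 + (1-y)/y" using y0 by (simp add: diff_divide_distrib)
    ultimately show ?thesis by simp
  qed
  show ?thesis using c2 c3 unfolding R_def A_def D_def by simp
qed



lemma d_g:
  fixes c x :: real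
  assumes S0: "0 < sin x" and q0: "1 < (c * sin x)^2"
  shows "((\<lambda>x. cos x * sqrt ((c * sin x)^2 - 1) / (sin x)^2) has_real_derivative
          (2 - (1 + c^2) * (sin x)^2) / (sqrt ((c * sin x)^2 - 1) * (sin x)^3)) (at x)"
proof -
  define q where "q = sqrt ((c * sin x)^2 - 1)"
  have qpos: "0 < q" using q0 q_def by simp
  have qq: "q^2 = (c * sin x)^2 - 1" using q0 q_def by simp
  have hq: "sqrt (c^2 * (sin x)^2 - 1) = q" by (simp add: q_def power_mult_distrib)
  have sc: "(sin x)^2 + (cos x)^2 = 1" by simp
  have h: "((\<lambda>x. (c * sin x)^2 - 1) has_real_derivative 2 * c^2 * sin x * cos x) (at x)"
    by (auto intro!: derivative_eq_intros simp: power2_eq_square)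
  have hs: "((\<lambda>x. sqrt ((c * sin x)^2 - 1)) has_real_derivative c^2 * sin x * cos x / q) (at x)"
    using DERIV_chain2[OF DERIV_real_sqrt h] q0 q_def by (simp add: field_simps)
  show ?thesis
    unfolding q_def[symmetric]
    apply (rule DERIV_cong[OF DERIV_divide[OF DERIV_mult[OF DERIV_cos hs] DERIV_power[OF DERIV_sin]]])
    using S0 apply simp
    using S0 qpos apply (simp add: field_simps)
    using qq sc hq by algebra
qed


lemma d_G:
  fixes c x :: real
  assumes c: "1 < c" and S0: "0 < sin x" and q0: "1 < (c * sin x)^2"
  shows "((\<lambda>x. arccos (cos x / (sin x * sqrt (c^2 - 1)))) has_real_derivative
          1 / (sin x * sqrt ((c * sin x)^2 - 1))) (at x)"
proof -
  define q where "q = sqrt ((c * sin x)^2 - 1)"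
  define m where "m = sqrt (c^2 - 1)"
  define v where "v = cos x / (sin x * m)"
  have qpos: "0 < q" using q0 q_def by simp
  have qq: "q^2 = (c * sin x)^2 - 1" using q0 q_def by simp
  have mpos: "0 < m" using c m_def by (simp add: one_less_power)
  have mm: "m^2 = c^2 - 1" using c m_def by (simp add: one_less_power less_imp_le)
  have sc: "(sin x)^2 + (cos x)^2 = 1" by simp
  have e1: "1 - v^2 = (q / (sin x * m))^2"
    unfolding v_def using S0 mpos qq mm
    by (simp add: field_simps power_mult_distrib) (use sc in algebra)
  have hv: "sqrt (1 - v^2) = q / (sin x * m)"
    using e1 qpos S0 mpos by (simp add: real_sqrt_unique)
  have "0 < 1 - v^2" using e1 qpos S0 mpos by simp
  then have "\<bar>v\<bar> < 1" by (simp add: abs_square_less_1)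
  then have v1: "-1 < v" "v < 1" by auto
  have dv: "((\<lambda>x. cos x / (sin x * m)) has_real_derivative
        (- sin x * (sin x * m) - cos x * (cos x * m)) / ((sin x * m) * (sin x * m))) (at x)"
    using DERIV_divide[OF DERIV_cos DERIV_cmult_right[OF DERIV_sin, of m]] S0 mpos
    by (simp add: mult.commute)
  show ?thesis
    unfolding m_def[symmetric] q_def[symmetric]
    apply (rule DERIV_cong[OF DERIV_chain2[OF DERIV_arccos[OF v1[unfolded v_def]] dv]])
    unfolding v_def[symmetric] hv
    using S0 mpos qpos by (simp add: field_simps) (use sc in algebra)
qed


lemma arcsin_lower:
  fixes x :: real assumes x0: "0 \<le> x" and x1: "x < 1"
  shows "x + x^3/6 \<le> arcsin x"
proof -
  define h where "h = (\<lambda>t::real. arcsin t - t - t^3/6)"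
  have "h 0 \<le> h x"
  proof (rule DERIV_nonneg_imp_increasing_open[OF x0])
    fix t :: real assume t0: "0 < t" and t1: "t < x"
    have tm: "-1 < t" "t < 1" using t0 t1 x1 by auto
    have D: "(h has_real_derivative inverse (sqrt (1 - t^2)) - 1 - 3 * t^2 / 6) (at t)"
      unfolding h_def
      by (rule DERIV_cong[OF DERIV_diff[OF DERIV_diff[OF DERIV_arcsin[OF tm] DERIV_ident] DERIV_cdivide[OF DERIV_pow]]]) simp
    have s0: "0 < 1 - t^2" using tm by (simp add: abs_square_less_1)
    have poly: "(1 - t^2) * (1 + t^2/2)^2 \<le> 1"
    proof -
      have "(1 - t^2) * (1 + t^2/2)^2 = 1 - 3/4 * t^4 - 1/4 * t^6"
        by (simp add: field_simps power2_eq_square eval_nat_numeral)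
      moreover have "0 \<le> t^4" "0 \<le> t^6" by (simp_all add: zero_le_even_power)
      ultimately show ?thesis by linarith
    qed
    have "sqrt (1 - t^2) * (1 + t^2/2) = sqrt ((1 - t^2) * (1 + t^2/2)^2)"
      by (simp add: real_sqrt_mult)
    also have "\<dots> \<le> 1" using poly by simp
    finally have "sqrt (1 - t^2) * (1 + t^2/2) \<le> 1" .
    then have "1 + t^2/2 \<le> inverse (sqrt (1 - t^2))"
      using s0 by (simp add: field_simps)
    then show "\<exists>y. (h has_real_derivative y) (at t) \<and> 0 \<le> y"
      using D by (intro exI[of _ "inverse (sqrt (1 - t^2)) - 1 - 3 * t^2 / 6"]) auto
  next
    show "continuous_on {0..x} h" unfolding h_def
      using x1 x0 by (intro continuous_intros) auto
  qed
  then show ?thesis unfolding h_def by simp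
qed


lemma sin_interval:
  fixes c \<psi> :: real
  assumes c: "1 < c" and p1: "arcsin (1/c) \<le> \<psi>" and p2: "\<psi> \<le> pi - arcsin (1/c)"
  shows "0 < sin \<psi>" and "1 \<le> c * sin \<psi>"
    and "arcsin (1/c) < \<psi> \<Longrightarrow> \<psi> < pi - arcsin (1/c) \<Longrightarrow> 1 < c * sin \<psi>"
proof -
  define a where "a = arcsin (1/c)"
  have x0: "0 < 1/c" "1/c < 1" using c by auto
  have a0: "0 < a" using x0 arcsin_less_mono[of 0 "1/c"] a_def by simp
  have a1: "a < pi/2" using arcsin_lt_bounded[of "1/c"] x0 a_def by simp
  have sa: "sin a = 1/c" unfolding a_def by (rule sin_arcsin; use x0 in linarith)
  have key: "sin a \<le> sin \<psi> \<and> (a < \<psi> \<and> \<psi> < pi - a \<longrightarrow> sin a < sin \<psi>)"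
  proof (cases "\<psi> \<le> pi/2")
    case True
    then show ?thesis using sin_mono_le_eq[of a \<psi>] sin_mono_less_eq[of a \<psi>] a0 a1 p1 a_def by auto
  next
    case False
    have "sin \<psi> = sin (pi - \<psi>)" by simp
    moreover have "a \<le> pi - \<psi>" "pi - \<psi> < pi/2" using p2 False a_def by auto
    ultimately show ?thesis using sin_mono_le_eq[of a "pi - \<psi>"] sin_mono_less_eq[of a "pi - \<psi>"] a0 a1 by auto
  qed
  show "1 \<le> c * sin \<psi>" using key sa c by (simp add: field_simps)
  then show "0 < sin \<psi>" using c by (smt (verit) mult_nonneg_nonpos)
  show "arcsin (1/c) < \<psi> \<Longrightarrow> \<psi> < pi - arcsin (1/c) \<Longrightarrow> 1 < c * sin \<psi>"
    using key sa c a_def by (simp add: field_simps)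
qed



theorem mainTheorem10:
  fixes c :: real
  assumes "c > 1"
  shows "(\<lambda>\<psi>. 1 / (1 - (Rminus (c * sin \<psi>))^2))
           integrable_on {arcsin (1/c) .. pi - arcsin (1/c)}
         \<and> DeltaTheta_MN c < pi"
proof -
  have c: "1 < c" using assms by simp
  define a where "a = arcsin (1/c)"
  define b where "b = pi - a"
  define f where "f = (\<lambda>\<psi>. 1 / (1 - (Rminus (c * sin \<psi>))^2))"
  define W where "W = (\<lambda>\<psi>::real. 1 + (43/100 + 3/10 / (c * sin \<psi>)^2) / ((c * sin \<psi>) * sqrt ((c * sin \<psi>)^2 - 1)))"
  define m where "m = sqrt (c^2 - 1)"
  define a1 where "a1 = (43/100 + 3/10 * (c^2 + 1) / (2 * c^2)) / c"
  define a2 where "a2 = 3/10 / (2 * c^3)"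
  define \<Phi> where "\<Phi> = (\<lambda>\<psi>. \<psi> + a1 * arccos (cos \<psi> / (sin \<psi> * m)) + a2 * (cos \<psi> * sqrt ((c * sin \<psi>)^2 - 1) / (sin \<psi>)^2))"
  have x0: "0 < 1/c" "1/c < 1" using c by auto
  have a0: "0 < a" using x0 arcsin_less_mono[of 0 "1/c"] a_def by simp
  have api: "a < pi/2" using arcsin_lt_bounded[of "1/c"] x0 a_def by simp
  have ab: "a < b" using api b_def by simp
  have sa: "sin a = 1/c" unfolding a_def by (rule sin_arcsin; use x0 in linarith)
  have mpos: "0 < m" using c m_def by (simp add: one_less_power)
  have ca: "cos a = m / c"
  proof -
    have "cos a = sqrt (1 - (1/c)^2)" unfolding a_def by (rule cos_arcsin; use x0 in linarith)
    also have "1 - (1/c)^2 = (m/c)^2" using c m_def by (simp add: field_simps power_divide one_less_power less_imp_le)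
    also have "sqrt ((m/c)^2) = m/c" using mpos c by simp
    finally show ?thesis .
  qed
  have sb: "sin b = 1/c" using sa b_def by simp
  have cb: "cos b = - m / c" using ca b_def by simp
  have SI: "0 < sin \<psi>" "1 \<le> c * sin \<psi>" if "\<psi> \<in> {a..b}" for \<psi>
    using sin_interval[OF c, of \<psi>] that a_def b_def by auto
  have SO: "1 < c * sin \<psi>" if "\<psi> \<in> {a<..<b}" for \<psi>
    using sin_interval[OF c, of \<psi>] that a_def b_def by auto
  have deriv: "(\<Phi> has_real_derivative W \<psi>) (at \<psi>)" if "\<psi> \<in> {a<..<b}" for \<psi>
  proof -
    have s1: "1 < c * sin \<psi>" using SO that by simp
    have S0: "0 < sin \<psi>" using SI that by auto
    have q0: "1 < (c * sin \<psi>)^2" using s1 by (simp add: one_less_power)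
    define q where "q = sqrt ((c * sin \<psi>)^2 - 1)"
    have qpos: "0 < q" using q0 q_def by simp
    have D: "(\<Phi> has_real_derivative 1 + a1 * (1 / (sin \<psi> * q)) + a2 * ((2 - (1 + c^2) * (sin \<psi>)^2) / (q * (sin \<psi>)^3))) (at \<psi>)"
      unfolding \<Phi>_def q_def m_def
      by (intro DERIV_add DERIV_cmult DERIV_ident d_G[OF c S0 q0] d_g[OF S0 q0])
    show ?thesis
      apply (rule DERIV_cong[OF D])
      unfolding W_def q_def[symmetric] a1_def a2_def
      using S0 qpos c by (simp add: field_simps power2_eq_square power3_eq_cube)
  qed
  have vb: "-1 \<le> cos \<psi> / (sin \<psi> * m) \<and> cos \<psi> / (sin \<psi> * m) \<le> 1" if "\<psi> \<in> {a..b}" for \<psi>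
  proof -
    have S0: "0 < sin \<psi>" and s1: "1 \<le> c * sin \<psi>" using SI that by auto
    have mm: "m^2 = c^2 - 1" using c m_def by (simp add: one_less_power less_imp_le)
    have "1 \<le> (c * sin \<psi>)^2" using s1 by (simp add: one_le_power)
    moreover have "(cos \<psi>)^2 = 1 - (sin \<psi>)^2" by (simp add: cos_squared_eq)
    moreover have "(sin \<psi> * m)^2 = (c * sin \<psi>)^2 - (sin \<psi>)^2"
      unfolding power_mult_distrib mm by (simp add: algebra_simps)
    ultimately have "(cos \<psi>)^2 \<le> (sin \<psi> * m)^2" by linarith
    then have "(cos \<psi> / (sin \<psi> * m))^2 \<le> 1" using S0 mpos by (simp add: power_divide divide_le_eq)
    then have "\<bar>cos \<psi> / (sin \<psi> * m)\<bar> \<le> 1" by (simp add: abs_square_le_1)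
    moreover have "\<And>v::real. \<bar>v\<bar> \<le> 1 \<Longrightarrow> -1 \<le> v \<and> v \<le> 1" by auto
    ultimately show ?thesis by blast
  qed
  have contPhi: "continuous_on {a..b} \<Phi>"
    unfolding \<Phi>_def using SI vb mpos
    by (intro continuous_intros) (auto simp: less_imp_neq[symmetric])
  have hasW: "(W has_integral (\<Phi> b - \<Phi> a)) {a..b}"
    by (rule fundamental_theorem_of_calculus_interior[OF less_imp_le[OF ab] contPhi])
       (use deriv in \<open>auto simp: has_real_derivative_iff_has_vector_derivative\<close>)
  have Pa: "\<Phi> a = a"
  proof -
    have e1: "cos a / (sin a * m) = 1" using ca sa mpos c by simp
    have e2: "(c * sin a)^2 - 1 = 0" using sa c by simp
    show ?thesis unfolding \<Phi>_def e1 e2 by simp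
  qed
  have Pb: "\<Phi> b = b + a1 * pi"
  proof -
    have e1: "cos b / (sin b * m) = -1" using cb sb mpos c by simp
    have e2: "(c * sin b)^2 - 1 = 0" using sb c by simp
    show ?thesis unfolding \<Phi>_def e1 e2 by simp
  qed
  have a1pi: "a1 * pi < 2 * a"
  proof -
    define x where "x = 1/c"
    have x0': "0 < x" "x < 1" using x0 x_def by auto
    have al: "x + x^3/6 \<le> a" using arcsin_lower[of x] x0' a_def x_def by simp
    have a1x: "a1 = x * (58/100 + 15/100 * x^2)"
      unfolding a1_def x_def using c by (simp add: field_simps power2_eq_square)
    have x2: "0 \<le> x^2" "x^2 \<le> 1" using x0' by (auto simp: power_le_one)
    have pb: "pi \<le> 3.1415926535899" using pi_approx by simp
    have "pi * x^2 \<le> 3.1415926535899 * x^2" using pb x2 by (intro mult_right_mono) auto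
    then have "pi * (58/100 + 15/100 * x^2) < 2 + x^2/3" using pb x2 by (simp add: algebra_simps)
    then have "x * (pi * (58/100 + 15/100 * x^2)) < x * (2 + x^2/3)"
      using x0' by (intro mult_strict_left_mono) auto
    then have "a1 * pi < 2 * (x + x^3/6)" unfolding a1x by (simp add: algebra_simps power3_eq_cube power2_eq_square)
    moreover have "2 * (x + x^3/6) \<le> 2 * a" using al by simp
    ultimately show ?thesis by (rule less_le_trans)
  qed
  have fcont: "isCont f \<psi>" if "\<psi> \<in> {a<..<b}" for \<psi>
  proof -
    have s1: "1 < c * sin \<psi>" using SO that by simp
    have hR: "isCont (\<lambda>\<psi>. Rminus (c * sin \<psi>)) \<psi>"
      by (rule isCont_o2[where f="\<lambda>\<psi>. c * sin \<psi>" and g=Rminus, OF _ Rminus_isCont[OF s1]]) (intro continuous_intros)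
    have R1: "Rminus (c * sin \<psi>) < 1" "0 < Rminus (c * sin \<psi>)"
      using Rminus_lt1[OF s1] Rminus_props[of "c * sin \<psi>"] s1 by auto
    then have "(Rminus (c * sin \<psi>))^2 < 1" by (simp add: power_less_one_iff)
    then show ?thesis unfolding f_def
      by (intro continuous_intros hR) simp
  qed
  have fmeas: "f \<in> borel_measurable (lebesgue_on {a<..<b})"
    by (rule continuous_imp_measurable_on_sets_lebesgue)
       (auto intro!: continuous_at_imp_continuous_on fcont)
  have Wint: "W integrable_on {a<..<b}" using hasW has_integral_Icc_iff_Ioo by blast
  have fW: "\<bar>f \<psi>\<bar> \<le> W \<psi>" if "\<psi> \<in> {a<..<b}" for \<psi>
  proof -
    have s1: "1 < c * sin \<psi>" using SO that by simp
    have R1: "Rminus (c * sin \<psi>) < 1" "0 < Rminus (c * sin \<psi>)"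
      using Rminus_lt1[OF s1] Rminus_props[of "c * sin \<psi>"] s1 by auto
    then have "(Rminus (c * sin \<psi>))^2 < 1" by (simp add: power_less_one_iff)
    then have "0 \<le> f \<psi>" unfolding f_def by simp
    then show ?thesis using f_bound[OF s1] unfolding f_def W_def by simp
  qed
  have fint': "f integrable_on {a<..<b}"
    by (rule measurable_bounded_by_integrable_imp_integrable_real[OF fmeas Wint fW]) auto
  then have fint: "f integrable_on {a..b}" using integrable_on_Icc_iff_Ioo by blast
  have "integral {a..b} f = integral {a<..<b} f" by (rule integral_open_interval_real)
  also have "\<dots> \<le> integral {a<..<b} W"
    by (rule integral_le[OF fint' Wint]) (use fW in force)
  also have "\<dots> = integral {a..b} W" by (rule integral_open_interval_real[symmetric])
  also have "\<dots> = \<Phi> b - \<Phi> a" using hasW by (rule integral_unique)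
  also have "\<dots> = pi - 2 * a + a1 * pi" using Pa Pb b_def by simp
  finally have "integral {a..b} f < pi" using a1pi by linarith
  then show ?thesis using fint unfolding DeltaTheta_MN_def f_def a_def b_def by simp
qed
end
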